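(* Let $r$ be a positive integer. There is a constant $c=c(r)$ such that every connected $S_{1,1,1,r}$-subgraph-free graph that is not subcubic has treedepth at most $c$.
   Context: For positive integers $w,x,y,z$, $S_{w,x,y,z}$ is the tree obtained from the star $K_{1,4}$ by subdividing its four edges $w-1$, $x-1$, $y-1$ and $z-1$ times respectively (so it consists of four paths of lengths $w,x,y,z$ sharing a common endvertex, the centre). A graph $G$ is $H$-subgraph-free if $H$ is not isomorphic to any subgraph of $G$ (subgraph obtained by vertex and edge deletions). A graph is subcubic if every vertex has degree at most $3$. The treedepth of $G$ is the minimum height of a rooted forest $F$ on vertex set $V(G)$ such that for every edge $uv$ of $G$, one of $u,v$ is an ancestor of the other in $F$. *)

theory Defs
  imports Main
begin

definition simple_graph :: "'a set \<Rightarrow> ('a \<times> 'a) set \<Rightarrow> bool" where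
  "simple_graph V E \<longleftrightarrow> finite V \<and> E \<subseteq> V \<times> V \<and> sym E \<and> irrefl E"

definition graph_connected :: "'a set \<Rightarrow> ('a \<times> 'a) set \<Rightarrow> bool" where
  "graph_connected V E \<longleftrightarrow> (\<forall>u\<in>V. \<forall>v\<in>V. (u, v) \<in> E\<^sup>*)"

definition subcubic :: "'a set \<Rightarrow> ('a \<times> 'a) set \<Rightarrow> bool" where
  "subcubic V E \<longleftrightarrow> (\<forall>v\<in>V. card {u. (v, u) \<in> E} \<le> 3)"

definition has_subgraph ::
  "'b set \<Rightarrow> ('b \<times> 'b) set \<Rightarrow> 'a set \<Rightarrow> ('a \<times> 'a) set \<Rightarrow> bool" where
  "has_subgraph VH EH V E \<longleftrightarrow>
     (\<exists>f. inj_on f VH \<and> f ` VH \<subseteq> V \<and> (\<forall>(a, b)\<in>EH. (f a, f b) \<in> E))"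

text \<open>The subdivided star S_{w,x,y,z}: centre (0,0); the arm i (i = 1..4) of length
  l_i consists of the vertices (i,1),...,(i,l_i), where (i,1) is adjacent to the centre
  and (i,j) is adjacent to (i,j+1).\<close>
definition arm_len :: "nat \<Rightarrow> nat \<Rightarrow> nat \<Rightarrow> nat \<Rightarrow> nat \<Rightarrow> nat" where
  "arm_len w x y z i = (if i = 1 then w else if i = 2 then x else if i = 3 then y else z)"

definition spider_V :: "nat \<Rightarrow> nat \<Rightarrow> nat \<Rightarrow> nat \<Rightarrow> (nat \<times> nat) set" where
  "spider_V w x y z = {(0, 0)} \<union> {(i, j). i \<in> {1..4} \<and> j \<in> {1..arm_len w x y z i}}"

definition spider_E :: "nat \<Rightarrow> nat \<Rightarrow> nat \<Rightarrow> nat \<Rightarrow> ((nat \<times> nat) \<times> (nat \<times> nat)) set" where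
  "spider_E w x y z =
     (let A = {((0, 0), (i, 1)) | i. i \<in> {1..4}}
            \<union> {((i, j), (i, Suc j)) | i j. i \<in> {1..4} \<and> 1 \<le> j \<and> Suc j \<le> arm_len w x y z i}
      in A \<union> A\<inverse>)"

text \<open>Rooted forests on V are encoded by a parent map: par v = None for roots,
  par v = Some u if u is the parent of v. The ancestor relation is the reflexive transitive closure of the
  parent-to-child relation; the depth of v is the number of vertices on the path from
  the root to v, and the height of the forest is the maximum depth.\<close>
definition parent_rel :: "('a \<Rightarrow> 'a option) \<Rightarrow> ('a \<times> 'a) set" where
  "parent_rel par = {(u, v). par v = Some u}"

definition rooted_forest :: "'a set \<Rightarrow> ('a \<Rightarrow> 'a option) \<Rightarrow> bool" where
  "rooted_forest V par \<longleftrightarrow>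
     (\<forall>v\<in>V. \<forall>u. par v = Some u \<longrightarrow> u \<in> V) \<and> (\<forall>v. v \<notin> V \<longrightarrow> par v = None)
     \<and> acyclic (parent_rel par)"

definition forest_depth :: "('a \<Rightarrow> 'a option) \<Rightarrow> 'a \<Rightarrow> nat" where
  "forest_depth par v = card {u. (u, v) \<in> (parent_rel par)\<^sup>*}"

definition forest_height :: "'a set \<Rightarrow> ('a \<Rightarrow> 'a option) \<Rightarrow> nat" where
  "forest_height V par = (if V = {} then 0 else Max (forest_depth par ` V))"

definition treedepth :: "'a set \<Rightarrow> ('a \<times> 'a) set \<Rightarrow> nat" where
  "treedepth V E = (LEAST h. \<exists>par. rooted_forest V par \<and> forest_height V par = h \<and>
      (\<forall>(u, v)\<in>E. (u, v) \<in> (parent_rel par)\<^sup>* \<or> (v, u) \<in> (parent_rel par)\<^sup>*))"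

end

theory Submission
  imports Defs
begin


fun walk :: "('a \<times> 'a) set \<Rightarrow> 'a list \<Rightarrow> bool" where
  "walk E [] = True"
| "walk E [x] = True"
| "walk E (x # y # xs) = ((x, y) \<in> E \<and> walk E (y # xs))"

lemma walk_Cons_iff: "walk E (x # xs) \<longleftrightarrow> (xs = [] \<or> ((x, hd xs) \<in> E \<and> walk E xs))"
  by (cases xs) auto

lemma walk_append: "walk E (xs @ y # ys) \<longleftrightarrow> walk E (xs @ [y]) \<and> walk E (y # ys)"
  by (induction xs rule: walk.induct) (auto simp: walk_Cons_iff)

lemma walk_tl: "walk E xs \<Longrightarrow> walk E (tl xs)"
  by (cases xs) (auto simp: walk_Cons_iff)

lemma walk_drop: "walk E xs \<Longrightarrow> walk E (drop n xs)"
  by (induction n arbitrary: xs) (auto simp: drop_Suc walk_tl)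

lemma walk_take: "walk E xs \<Longrightarrow> walk E (take n xs)"
proof (induction E xs arbitrary: n rule: walk.induct)
  case (3 E x y xs)
  show ?case
  proof (cases n)
    case (Suc m)
    then show ?thesis using 3 3(1)[of m] by (cases m) auto
  qed simp
qed (auto simp: take_Cons' )

lemma walk_rev: "sym E \<Longrightarrow> walk E xs \<Longrightarrow> walk E (rev xs)"
proof (induction E xs rule: walk.induct)
  case (3 E x y xs)
  then have "walk E (rev xs @ [y])" by simp
  moreover have "(y, x) \<in> E" using 3 by (auto dest: symD)
  ultimately show ?case using walk_append[of E "rev xs" y "[x]"] by simp
qed auto

lemma walk_nth: "walk E xs \<Longrightarrow> Suc i < length xs \<Longrightarrow> (xs ! i, xs ! Suc i) \<in> E"
proof (induction E xs arbitrary: i rule: walk.induct)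
  case (3 E x y xs)
  then show ?case by (cases i) auto
qed auto


lemma spider_emb:
  assumes symE: "sym E" and r: "r \<ge> 1"
    and len: "length arm = Suc r" and w: "walk E arm" and d: "distinct arm"
    and ld: "l1 \<noteq> l2" "l1 \<noteq> l3" "l2 \<noteq> l3"
    and le: "(hd arm, l1) \<in> E" "(hd arm, l2) \<in> E" "(hd arm, l3) \<in> E"
    and ln: "l1 \<notin> set arm" "l2 \<notin> set arm" "l3 \<notin> set arm"
    and sV: "set arm \<subseteq> V" and lV: "l1 \<in> V" "l2 \<in> V" "l3 \<in> V"
  shows "has_subgraph (spider_V 1 1 1 r) (spider_E 1 1 1 r) V E"
proof -
  define f where "f p = (if fst p = 1 then l1 else if fst p = 2 then l2 else if fst p = 3 then l3
      else arm ! snd p)" for p :: "nat \<times> nat"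
  have SV: "spider_V 1 1 1 r = {(0,0),(1,1),(2,1),(3,1)} \<union> {(4,j) | j. 1 \<le> j \<and> j \<le> r}"
    unfolding spider_V_def arm_len_def by (auto simp: le_Suc_eq numeral_eq_Suc) 
  have hd0: "hd arm = arm ! 0" using len by (cases arm) auto
  have inset: "j \<le> r \<Longrightarrow> arm ! j \<in> set arm" for j using len by auto
  have inj: "inj_on f (spider_V 1 1 1 r)"
    unfolding SV inj_on_def f_def
    using ld ln inset d len by (auto simp: nth_eq_iff_index_eq)
  have img: "f ` spider_V 1 1 1 r \<subseteq> V"
    unfolding SV f_def using lV sV inset by auto
  have A: "(f a, f b) \<in> E"
    if "(a, b) \<in> {((0, 0), (i, 1)) | i. i \<in> {1..4::nat}}
            \<union> {((i, j), (i, Suc j)) | i j. i \<in> {1..4} \<and> 1 \<le> j \<and> Suc j \<le> arm_len 1 1 1 r i}" for a b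
  proof -
    have "i \<in> {1..4::nat} \<Longrightarrow> i = 1 \<or> i = 2 \<or> i = 3 \<or> i = 4" for i by auto
    then show ?thesis using that le hd0 walk_nth[OF w, of 0] walk_nth[OF w] len r
      unfolding f_def arm_len_def by (auto split: if_splits)
  qed
  have "(f a, f b) \<in> E" if "(a, b) \<in> spider_E 1 1 1 r" for a b
    using that A[of a b] A[of b a] symE unfolding spider_E_def Let_def by (auto dest: symD)
  then show ?thesis unfolding has_subgraph_def using inj img by blast
qed




lemma window:
  assumes "distinct qs" "qs \<noteq> []" "hd qs \<in> N" "finite N" "r \<ge> 1"
    "r * card (N \<inter> set qs) \<le> length qs"
  shows "\<exists>t. t < length qs \<and> hd (drop t qs) \<in> N \<and> r \<le> length (drop t qs)
     \<and> N \<inter> set (take r (drop t qs)) = {hd (drop t qs)}"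
  using assms
proof (induction "length qs" arbitrary: qs rule: less_induct)
  case less
  have c1: "card (N \<inter> set qs) \<ge> 1"
    proof -
    have "hd qs \<in> N \<inter> set qs" using less.prems by auto
    then have "N \<inter> set qs \<noteq> {}" by blast
    then show ?thesis by (simp add: Suc_le_eq card_gt_0_iff)
  qed
  show ?case
  proof (cases "N \<inter> set (take r qs) = {hd qs}")
    case True
    have "r \<le> length qs" using c1 less.prems(6)
      proof -
      have "r * 1 \<le> r * card (N \<inter> set qs)" using c1 by (rule mult_le_mono2)
      then show ?thesis using less.prems(6) by linarith
    qed
    then show ?thesis using True less.prems by (intro exI[of _ 0]) auto
  next
    case False
    have "hd qs \<in> set (take r qs)" using less.prems
      by (cases qs; cases r) auto
    then obtain y where y: "y \<in> N" "y \<in> set (take r qs)" "y \<noteq> hd qs"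
      using False less.prems(3) by blast
    then obtain s where s: "s < length (take r qs)" "take r qs ! s = y"
      by (auto simp: in_set_conv_nth)
    have sr: "s < r" "s < length qs" using s by auto
    have ys: "qs ! s = y" using s by simp
    have s0: "s \<noteq> 0" using y ys less.prems(2) by (metis hd_conv_nth)
    define qs' where "qs' = drop s qs"
    have hq': "hd qs' = y" unfolding qs'_def using ys sr by (simp add: hd_drop_conv_nth)
    have lq': "length qs' = length qs - s" unfolding qs'_def by simp
    have "hd qs \<notin> set qs'"
    proof -
      obtain x xs where qx: "qs = x # xs" using less.prems(2) by (cases qs) auto
      then have "set qs' \<subseteq> set xs" unfolding qs'_def using s0 by (cases s) (auto dest: in_set_dropD)
      then show ?thesis using less.prems(1) qx by auto
    qed
    then have sub: "N \<inter> set qs' \<subseteq> (N \<inter> set qs) - {hd qs}"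
      using set_drop_subset[of s qs] unfolding qs'_def by blast
    have fin: "finite (N \<inter> set qs)" by simp
    have "card (N \<inter> set qs') \<le> card (N \<inter> set qs) - 1"
      using card_mono[OF _ sub] less.prems(2,3) fin by (simp add: card_Diff_singleton)
    then have "r * card (N \<inter> set qs') \<le> r * card (N \<inter> set qs) - r"
      by (metis diff_mult_distrib2 mult.right_neutral mult_le_mono2)
    also have "\<dots> \<le> length qs'" using less.prems(6) lq' sr by linarith
    finally have c': "r * card (N \<inter> set qs') \<le> length qs'" .
    have ne: "qs' \<noteq> []" using sr unfolding qs'_def by simp
    have dq: "distinct qs'" unfolding qs'_def using less.prems(1) by simp
    have "length qs' < length qs" using lq' s0 sr by simp
    from less.hyps[OF this dq ne _ less.prems(4,5) c'] hq' y
    obtain t where t: "t < length qs'" "hd (drop t qs') \<in> N" "r \<le> length (drop t qs')"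
      "N \<inter> set (take r (drop t qs')) = {hd (drop t qs')}" by blast
    show ?thesis using t unfolding qs'_def by (intro exI[of _ "s + t"]) (auto simp: add.commute)
  qed
qed



lemma three: "card S \<ge> 3 \<Longrightarrow> \<exists>a b c. a \<in> S \<and> b \<in> S \<and> c \<in> S \<and> a \<noteq> b \<and> a \<noteq> c \<and> b \<noteq> c"
proof -
  assume "card S \<ge> 3"
  then obtain a B where "S = insert a B" "a \<notin> B" "2 \<le> card B" "finite B"
    using card_le_Suc_iff[of 2 S] by (auto simp: numeral_3_eq_3)
  moreover then obtain b C where "B = insert b C" "b \<notin> C" "1 \<le> card C" "finite C"
    using card_le_Suc_iff[of 1 B] by (auto simp: numeral_2_eq_2)
  moreover then obtain c D where "C = insert c D"
    using card_le_Suc_iff[of 0 C] by auto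
  ultimately show ?thesis by (intro exI[of _ a] exI[of _ b] exI[of _ c]) auto
qed

lemma centre:
  assumes symE: "sym E" and irr: "irrefl E" and EV: "E \<subseteq> V \<times> V" and r: "r \<ge> 1"
    and N4: "card {u. (v, u) \<in> E} \<ge> 4"
    and ps: "distinct ps" "walk E ps" "ps \<noteq> []" "hd ps = v" "set ps \<subseteq> V"
    and len: "length ps \<ge> r * (r + 2) + 1"
  shows "has_subgraph (spider_V 1 1 1 r) (spider_E 1 1 1 r) V E"
proof -
  define N where "N = {u. (v, u) \<in> E}"
  have finN: "finite N" using N4 unfolding N_def by (metis card.infinite not_numeral_le_zero)
  have vN: "v \<notin> N" using irr unfolding N_def irrefl_def by auto
  have NV: "N \<subseteq> V" using EV unfolding N_def by auto
  have vE: "x \<in> N \<Longrightarrow> (v, x) \<in> E" for x unfolding N_def by simp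
  obtain qs where pq: "ps = v # qs" using ps(3,4) by (cases ps) auto
  have rr: "r * (r + 2) \<ge> r" by simp
  show ?thesis
  proof (cases "card (N \<inter> set ps) \<ge> r + 3")
    case True
    define arm where "arm = v # take r qs"
    have la: "length arm = Suc r" unfolding arm_def using len pq rr by simp
    have wa: "walk E arm" unfolding arm_def using walk_take[OF ps(2), of "Suc r"] pq by simp
    have da: "distinct arm" unfolding arm_def using ps(1) pq by (auto dest: in_set_takeD)
    have sa: "set arm \<subseteq> V" unfolding arm_def using ps(5) pq by (auto dest: in_set_takeD)
    have "N \<inter> set arm \<subseteq> set (take r qs)" unfolding arm_def using vN by auto
    then have "card (N \<inter> set arm) \<le> r"
      by (metis List.finite_set card_length card_mono le_trans length_take min.bounded_iff)
    then have "card (N \<inter> set ps - N \<inter> set arm) \<ge> 3"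
      using diff_card_le_card_Diff[of "N \<inter> set arm" "N \<inter> set ps"] True by simp
    then obtain a b c where abc: "a \<in> N \<inter> set ps - N \<inter> set arm" "b \<in> N \<inter> set ps - N \<inter> set arm"
      "c \<in> N \<inter> set ps - N \<inter> set arm" "a \<noteq> b" "a \<noteq> c" "b \<noteq> c" using three by blast
    have "hd arm = v" unfolding arm_def by simp
    then show ?thesis using spider_emb[OF symE r la wa da abc(4,5,6)] abc vE NV sa by auto
  next
    case False
    have lq: "length qs \<ge> r * (r + 2)" using len pq by simp
    have "r * (r + 2) \<noteq> 0" using r by simp
    then have qne: "qs \<noteq> []" using lq by auto
    have "(v, hd qs) \<in> E" using ps(2) pq qne by (simp add: walk_Cons_iff)
    then have hq: "hd qs \<in> N" unfolding N_def by simp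
    have "card (N \<inter> set qs) \<le> r + 2"
      proof -
      have "N \<inter> set qs \<subseteq> N \<inter> set ps" using pq by auto
      then have "card (N \<inter> set qs) \<le> card (N \<inter> set ps)" by (intro card_mono) auto
      then show ?thesis using False by linarith
    qed
    then have "r * card (N \<inter> set qs) \<le> length qs"
      by (meson lq le_trans mult_le_mono2)
    from window[OF _ qne hq finN r this] ps(1) pq
    obtain t where t: "t < length qs" "hd (drop t qs) \<in> N" "r \<le> length (drop t qs)"
      "N \<inter> set (take r (drop t qs)) = {hd (drop t qs)}" by auto
    define ws where "ws = drop t qs"
    define arm where "arm = v # take r ws"
    have tne: "take r ws \<noteq> []" using t(1) r unfolding ws_def by simp
    have la: "length arm = Suc r" unfolding arm_def using t(3) ws_def by simp
    have wq: "walk E qs" using ps(2) pq walk_tl by fastforce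
    have wa: "walk E arm" unfolding arm_def using tne walk_take[OF walk_drop[OF wq]] t(2) vE
      unfolding ws_def by (simp add: walk_Cons_iff)
    have sub: "set (take r ws) \<subseteq> set qs" unfolding ws_def by (auto dest: in_set_takeD in_set_dropD)
    have da: "distinct arm" unfolding arm_def using ps(1) pq sub unfolding ws_def by auto
    have sa: "set arm \<subseteq> V" unfolding arm_def using ps(5) pq sub by auto
    have "card (N - {hd ws}) = card N - 1" using finN t(2) unfolding ws_def by (simp add: card_Diff_singleton)
    then have "card (N - {hd ws}) \<ge> 3" using N4 unfolding N_def[symmetric] by linarith
    then obtain a b c where abc: "a \<in> N - {hd ws}" "b \<in> N - {hd ws}"
      "c \<in> N - {hd ws}" "a \<noteq> b" "a \<noteq> c" "b \<noteq> c" using three by blast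
    have nin: "x \<in> N - {hd ws} \<Longrightarrow> x \<notin> set arm" for x
      using t(4) vN unfolding arm_def ws_def by auto
    have "hd arm = v" unfolding arm_def by simp
    then show ?thesis using spider_emb[OF symE r la wa da abc(4,5,6)] abc vE NV sa nin by auto
  qed
qed



lemma reach_path:
  assumes "(v, w) \<in> E\<^sup>*" "w \<in> S" "S \<subseteq> V" "E \<subseteq> V \<times> V"
  shows "\<exists>q y. y \<in> S \<and> walk E (q @ [y]) \<and> distinct (q @ [y]) \<and> set q \<inter> S = {}
      \<and> hd (q @ [y]) = v \<and> set (q @ [y]) \<subseteq> V"
  using assms(1)
proof (induction rule: converse_rtrancl_induct)
  case base
  then show ?case using assms(2,3) by (intro exI[of _ "[]"] exI[of _ w]) auto
next
  case (step x z)
  then obtain q y where qy: "y \<in> S" "walk E (q @ [y])" "distinct (q @ [y])" "set q \<inter> S = {}"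
      "hd (q @ [y]) = z" "set (q @ [y]) \<subseteq> V" by blast
  have xV: "x \<in> V" using step(1) assms(4) by auto
  show ?case
  proof (cases "x \<in> S")
    case True
    then show ?thesis using xV by (intro exI[of _ "[]"] exI[of _ x]) auto
  next
    case xS: False
    show ?thesis
    proof (cases "x \<in> set q")
      case False
      have "walk E (x # q @ [y])" using qy(2,5) step(1) by (simp add: walk_Cons_iff)
      then show ?thesis using qy xS False xV by (intro exI[of _ "x # q"] exI[of _ y]) auto
    next
      case True
      then obtain a b where ab: "q = a @ x # b" by (metis split_list)
      have "walk E (a @ x # (b @ [y]))" using qy(2) ab by simp
      then have "walk E (x # b @ [y])" using walk_append[of E a x "b @ [y]"] by blast
      then show ?thesis using qy xS ab by (intro exI[of _ "x # b"] exI[of _ y]) auto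
    qed
  qed
qed

lemma long_from_v:
  assumes EV: "E \<subseteq> V \<times> V" and symE: "sym E" and conn: "\<forall>u\<in>V. \<forall>w\<in>V. (u, w) \<in> E\<^sup>*"
    and vV: "v \<in> V"
    and P: "distinct P" "walk E P" "set P \<subseteq> V" "length P \<ge> 2 * K"
  shows "\<exists>ps. distinct ps \<and> walk E ps \<and> ps \<noteq> [] \<and> hd ps = v \<and> set ps \<subseteq> V \<and> length ps \<ge> K"
proof (cases "P = []")
  case True
  then show ?thesis using P(4) vV by (intro exI[of _ "[v]"]) auto
next
  case False
  have "hd P \<in> V" using P(3) False by auto
  then have "(v, hd P) \<in> E\<^sup>*" using conn vV by blast
  from reach_path[OF this _ P(3) EV] False
  obtain q y where qy: "y \<in> set P" "walk E (q @ [y])" "distinct (q @ [y])" "set q \<inter> set P = {}"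
      "hd (q @ [y]) = v" "set (q @ [y]) \<subseteq> V" by auto
  obtain i where i: "i < length P" "P ! i = y" using qy(1) by (metis in_set_conv_nth)
  have "\<exists>H'. distinct (y # H') \<and> walk E (y # H') \<and> set (y # H') \<subseteq> set P \<and> length (y # H') \<ge> K"
  proof (cases "length P - i \<ge> K")
    case True
    have "drop i P = y # drop (Suc i) P" using i by (metis Cons_nth_drop_Suc)
    have "distinct (drop i P)" using P(1) by simp
    moreover have "walk E (drop i P)" using walk_drop[OF P(2)] by blast
    moreover have "set (drop i P) \<subseteq> set P" by (rule set_drop_subset)
    moreover have "length (drop i P) \<ge> K" using True by simp
    ultimately show ?thesis unfolding \<open>drop i P = y # drop (Suc i) P\<close> by blast
  next
    case False
    have tk: "take (Suc i) P = take i P @ [y]" using i by (simp add: take_Suc_conv_app_nth)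
    have "walk E (rev (take (Suc i) P))" using walk_rev[OF symE walk_take[OF P(2)]] by blast
    then have w: "walk E (y # rev (take i P))" using tk by simp
    have "distinct (rev (take (Suc i) P))" using P(1) by simp
    then have d: "distinct (y # rev (take i P))" using tk by simp
    have s: "set (y # rev (take i P)) \<subseteq> set P" using qy(1) by (auto dest: in_set_takeD)
    have "length (y # rev (take i P)) \<ge> K" using False i P(4) by simp
    then show ?thesis using w d s by blast
  qed
  then obtain H' where H: "distinct (y # H')" "walk E (y # H')" "set (y # H') \<subseteq> set P" "length (y # H') \<ge> K"
    by blast
  define ps where "ps = q @ y # H'"
  have "walk E ps" unfolding ps_def using walk_append[of E q y H'] qy(2) H(2) by blast
  moreover have "distinct ps"
  proof -
    have "set q \<inter> set (y # H') = {}" using qy(4) H(3) by blast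
    moreover have "distinct q" using qy(3) by simp
    ultimately show ?thesis unfolding ps_def using H(1) by (simp only: distinct_append) 
  qed
  moreover have "hd ps = v" unfolding ps_def using qy(5) by (cases q) auto
  moreover have "set ps \<subseteq> V" unfolding ps_def using qy(6) H(3) P(3) by auto
  moreover have "length ps \<ge> K" unfolding ps_def using H(4) by simp
  ultimately show ?thesis unfolding ps_def by blast
qed



definition dfs_forest :: "'a set \<Rightarrow> ('a \<times> 'a) set \<Rightarrow> ('a \<Rightarrow> 'a option) \<Rightarrow> bool" where
  "dfs_forest V E par \<longleftrightarrow> rooted_forest V par \<and> (\<forall>x u. par x = Some u \<longrightarrow> (u, x) \<in> E)
     \<and> (\<forall>(u, w)\<in>E. (u, w) \<in> (parent_rel par)\<^sup>* \<or> (w, u) \<in> (parent_rel par)\<^sup>*)"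

lemma pr_iff[simp]: "(u, x) \<in> parent_rel par \<longleftrightarrow> par x = Some u"
  unfolding parent_rel_def by simp

lemma pr_sub: assumes "rooted_forest V par" shows "parent_rel par \<subseteq> V \<times> V"
proof (rule subsetI, clarify)
  fix u v assume "(u, v) \<in> parent_rel par"
  then have p: "par v = Some u" by simp
  then have "v \<in> V" using assms unfolding rooted_forest_def by (metis option.distinct(1))
  then show "u \<in> V \<and> v \<in> V" using p assms unfolding rooted_forest_def by blast
qed

lemma wf_pr: assumes "rooted_forest V par" "finite V" shows "wf (parent_rel par)"
proof -
  have "finite (parent_rel par)" by (rule finite_subset[OF pr_sub[OF assms(1)]]) (simp add: assms(2))
  moreover have "acyclic (parent_rel par)" using assms(1) unfolding rooted_forest_def by blast
  ultimately show ?thesis by (rule finite_acyclic_wf)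
qed

lemma combine:
  assumes c: "dfs_forest C EC pc" and d: "dfs_forest D ED pd" and cd: "C \<inter> D = {}"
    and E: "E = EC \<union> ED" and fin: "finite C" "finite D"
  shows "dfs_forest (C \<union> D) E (\<lambda>x. if x \<in> C then pc x else pd x)"
proof -
  define par where "par = (\<lambda>x. if x \<in> C then pc x else pd x)"
  have rc: "rooted_forest C pc" and rd: "rooted_forest D pd" using c d unfolding dfs_forest_def by auto
  have pc_out: "x \<notin> C \<Longrightarrow> pc x = None" for x using rc unfolding rooted_forest_def by auto
  have pd_out: "x \<notin> D \<Longrightarrow> pd x = None" for x using rd unfolding rooted_forest_def by auto
  have PR: "parent_rel par = parent_rel pc \<union> parent_rel pd"
  proof (rule set_eqI, clarify)
    fix u x
    show "(u, x) \<in> parent_rel par \<longleftrightarrow> (u, x) \<in> parent_rel pc \<union> parent_rel pd"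
      using pc_out pd_out cd unfolding par_def by (cases "x \<in> C"; cases "x \<in> D") auto
  qed
  have "Domain (parent_rel pc) \<inter> Range (parent_rel pd) = {}"
    using pr_sub[OF rc] pr_sub[OF rd] cd by blast
  then have "wf (parent_rel par)" unfolding PR using wf_Un wf_pr[OF rc fin(1)] wf_pr[OF rd fin(2)] by blast
  then have acyc: "acyclic (parent_rel par)" by (rule wf_acyclic)
  have pcin: "pc x = Some u \<Longrightarrow> u \<in> C" for x u
    using rc pc_out unfolding rooted_forest_def by (metis option.distinct(1))
  have pdin: "pd x = Some u \<Longrightarrow> u \<in> D" for x u
    using rd pd_out unfolding rooted_forest_def by (metis option.distinct(1))
  have rf: "rooted_forest (C \<union> D) par"
    unfolding rooted_forest_def
  proof (intro conjI acyc allI ballI impI)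
    fix v u assume "par v = Some u" then show "u \<in> C \<union> D"
      unfolding par_def using pcin pdin by (auto split: if_splits)
  next
    fix v assume "v \<notin> C \<union> D" then show "par v = None" unfolding par_def using pd_out by auto
  qed
  have pec: "pc x = Some u \<Longrightarrow> (u, x) \<in> EC" for x u using c unfolding dfs_forest_def by blast
  have ped: "pd x = Some u \<Longrightarrow> (u, x) \<in> ED" for x u using d unfolding dfs_forest_def by blast
  have pe: "\<forall>x u. par x = Some u \<longrightarrow> (u, x) \<in> E"
    using pec ped unfolding par_def E by auto
  have cc: "(u, w) \<in> EC \<Longrightarrow> (u, w) \<in> (parent_rel pc)\<^sup>* \<or> (w, u) \<in> (parent_rel pc)\<^sup>*" for u w
    using c unfolding dfs_forest_def by blast
  have cd': "(u, w) \<in> ED \<Longrightarrow> (u, w) \<in> (parent_rel pd)\<^sup>* \<or> (w, u) \<in> (parent_rel pd)\<^sup>*" for u w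
    using d unfolding dfs_forest_def by blast
  have m1: "(parent_rel pc)\<^sup>* \<subseteq> (parent_rel par)\<^sup>*" "(parent_rel pd)\<^sup>* \<subseteq> (parent_rel par)\<^sup>*"
    using rtrancl_mono[of "parent_rel pc" "parent_rel par"] rtrancl_mono[of "parent_rel pd" "parent_rel par"]
    unfolding PR by blast+
  have "\<forall>(u, w)\<in>E. (u, w) \<in> (parent_rel par)\<^sup>* \<or> (w, u) \<in> (parent_rel par)\<^sup>*"
  proof (clarify)
    fix u w assume "(u, w) \<in> E" "(w, u) \<notin> (parent_rel par)\<^sup>*"
    then show "(u, w) \<in> (parent_rel par)\<^sup>*"
      using cc[of u w] cd'[of u w] m1 unfolding E by blast
  qed
  then show ?thesis using rf pe unfolding dfs_forest_def par_def by blast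
qed



lemma walk_snoc: "walk E (xs @ [x]) \<longleftrightarrow> walk E xs \<and> (xs \<noteq> [] \<longrightarrow> (last xs, x) \<in> E)"
  by (induction E xs rule: walk.induct) auto

lemma add_root:
  assumes p: "dfs_forest V' E' p'" and a: "a \<notin> V'" and fin: "finite V'"
    and roots: "\<forall>x\<in>V'. p' x = None \<longrightarrow> (a, x) \<in> E"
    and EE: "E' \<subseteq> E" and Ecases: "\<forall>(u, w)\<in>E. (u, w) \<in> E' \<or> u = a \<or> w = a"
    and EV: "E \<subseteq> insert a V' \<times> insert a V'"
  shows "dfs_forest (insert a V') E
     (\<lambda>x. if x = a then None else if x \<in> V' \<and> p' x = None then Some a else p' x)"
proof -
  define par where "par = (\<lambda>x. if x = a then None else if x \<in> V' \<and> p' x = None then Some a else p' x)"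
  have rp: "rooted_forest V' p'" using p unfolding dfs_forest_def by blast
  have p_out: "x \<notin> V' \<Longrightarrow> p' x = None" for x using rp unfolding rooted_forest_def by blast
  have p_in: "p' x = Some u \<Longrightarrow> u \<in> V' \<and> x \<in> V'" for x u
    using pr_sub[OF rp] pr_iff[of u x p'] by blast
  define S where "S = {(a, x) | x. x \<in> V' \<and> p' x = None}"
  have PR: "parent_rel par = S \<union> parent_rel p'"
  proof (rule set_eqI, clarify)
    fix u x
    show "(u, x) \<in> parent_rel par \<longleftrightarrow> (u, x) \<in> S \<union> parent_rel p'"
      using a p_out by (cases "x = a"; cases "x \<in> V'"; cases "p' x") (auto simp: par_def S_def)
  qed
  have transS: "trans S" unfolding S_def trans_def using a by blast
  have "acyclic S" unfolding acyclic_def trancl_id[OF transS] using a unfolding S_def by blast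
  moreover have "finite S"
  proof (rule finite_subset)
    show "S \<subseteq> {a} \<times> V'" unfolding S_def by blast
  qed (simp add: fin)
  ultimately have wfS: "wf S" using finite_acyclic_wf by blast
  have "Domain S \<inter> Range (parent_rel p') = {}" using pr_sub[OF rp] a unfolding S_def by blast
  then have "wf (parent_rel par)" unfolding PR using wf_Un[OF wfS wf_pr[OF rp fin]] by blast
  then have acyc: "acyclic (parent_rel par)" by (rule wf_acyclic)
  have rf: "rooted_forest (insert a V') par"
    unfolding rooted_forest_def
  proof (intro conjI acyc allI ballI impI)
    fix v u assume "par v = Some u" then show "u \<in> insert a V'"
      unfolding par_def using p_in by (auto split: if_splits)
  next
    fix v assume "v \<notin> insert a V'" then show "par v = None" unfolding par_def using p_out by auto
  qed
  have pe0: "p' x = Some u \<Longrightarrow> (u, x) \<in> E'" for x u using p unfolding dfs_forest_def by blast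
  have pe: "\<forall>x u. par x = Some u \<longrightarrow> (u, x) \<in> E"
  proof (intro allI impI)
    fix x u assume "par x = Some u"
    then show "(u, x) \<in> E" unfolding par_def using roots pe0 EE by (auto split: if_splits)
  qed
  have mono: "(parent_rel p')\<^sup>* \<subseteq> (parent_rel par)\<^sup>*"
    using rtrancl_mono[of "parent_rel p'" "parent_rel par"] unfolding PR by blast
  have anc: "x \<in> V' \<longrightarrow> (a, x) \<in> (parent_rel par)\<^sup>*" for x
  proof (induction x rule: wf_induct_rule[OF wf_pr[OF rp fin]])
    case (1 x)
    show ?case
    proof (cases "p' x")
      case None
      then show ?thesis using a by (auto simp: par_def)
    next
      case (Some u)
      then have "u \<in> V'" "x \<in> V'" using p_in by auto
      moreover have "(u, x) \<in> parent_rel par" using Some a \<open>x \<in> V'\<close> by (auto simp: par_def)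
      ultimately show ?thesis using 1[of u] Some by (meson pr_iff rtrancl.rtrancl_into_rtrancl)
    qed
  qed
  have cc: "(u, w) \<in> E' \<Longrightarrow> (u, w) \<in> (parent_rel p')\<^sup>* \<or> (w, u) \<in> (parent_rel p')\<^sup>*" for u w
    using p unfolding dfs_forest_def by blast
  have "\<forall>(u, w)\<in>E. (u, w) \<in> (parent_rel par)\<^sup>* \<or> (w, u) \<in> (parent_rel par)\<^sup>*"
  proof (clarify)
    fix u w assume uw: "(u, w) \<in> E" and nw: "(w, u) \<notin> (parent_rel par)\<^sup>*"
    have "u \<in> insert a V'" "w \<in> insert a V'" using uw EV by auto
    then show "(u, w) \<in> (parent_rel par)\<^sup>*"
      using Ecases uw nw cc[of u w] mono anc[of u] anc[of w] by blast
  qed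
  then show ?thesis using rf pe unfolding dfs_forest_def par_def by blast
qed

lemma chain:
  assumes d: "dfs_forest V E par" and fin: "finite V"
  assumes xV: "x \<in> V"
  shows "\<exists>xs. walk E xs \<and> distinct xs \<and> xs \<noteq> [] \<and> last xs = x
     \<and> set xs = {u. (u, x) \<in> (parent_rel par)\<^sup>*} \<and> set xs \<subseteq> V"
proof -
  have rp: "rooted_forest V par" using d unfolding dfs_forest_def by blast
  have wf: "wf (parent_rel par)" by (rule wf_pr[OF rp fin])
  have main: "x \<in> V \<Longrightarrow> \<exists>xs. walk E xs \<and> distinct xs \<and> xs \<noteq> [] \<and> last xs = x
     \<and> set xs = {u. (u, x) \<in> (parent_rel par)\<^sup>*} \<and> set xs \<subseteq> V" for x
  proof (induction x rule: wf_induct_rule[OF wf])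
  case (1 x)
  show ?case
  proof (cases "par x")
    case None
    have "{u. (u, x) \<in> (parent_rel par)\<^sup>*} = {x}" using None by (auto elim: rtranclE)
    then show ?thesis using 1 by (intro exI[of _ "[x]"]) auto
  next
    case (Some u)
    have uV: "u \<in> V" using pr_sub[OF rp] Some pr_iff[of u x par] by blast
    from 1(1)[of u] Some uV obtain xs where xs: "walk E xs" "distinct xs" "xs \<noteq> []" "last xs = u"
      "set xs = {w. (w, u) \<in> (parent_rel par)\<^sup>*}" "set xs \<subseteq> V" by auto
    have ux: "(u, x) \<in> E" using d Some unfolding dfs_forest_def by blast
    have ac: "acyclic (parent_rel par)" using rp unfolding rooted_forest_def by blast
    have xn: "x \<notin> set xs"
    proof
      assume "x \<in> set xs"
      then have "(x, u) \<in> (parent_rel par)\<^sup>*" using xs(5) by blast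
      then have "(x, x) \<in> (parent_rel par)\<^sup>+" using Some by (meson pr_iff rtrancl_into_trancl1)
      then show False using ac unfolding acyclic_def by blast
    qed
    have "{w. (w, x) \<in> (parent_rel par)\<^sup>*} = insert x {w. (w, u) \<in> (parent_rel par)\<^sup>*}"
    proof
      show "{w. (w, x) \<in> (parent_rel par)\<^sup>*} \<subseteq> insert x {w. (w, u) \<in> (parent_rel par)\<^sup>*}"
        using Some by (auto elim: rtranclE)
      show "insert x {w. (w, u) \<in> (parent_rel par)\<^sup>*} \<subseteq> {w. (w, x) \<in> (parent_rel par)\<^sup>*}"
        using Some by (auto intro: rtrancl_into_rtrancl)
    qed
    moreover have "walk E (xs @ [x])" using walk_snoc[of E xs x] xs ux by simp
    ultimately show ?thesis using xs xn 1(2) by (intro exI[of _ "xs @ [x]"]) auto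
  qed
  qed
  then show ?thesis using xV by blast
qed



lemma reach_avoid:
  assumes "(a, x) \<in> E\<^sup>*" "x \<noteq> a" "E \<subseteq> V \<times> V"
  shows "\<exists>y. (a, y) \<in> E \<and> y \<in> V - {a} \<and> (y, x) \<in> (E \<inter> (V - {a}) \<times> (V - {a}))\<^sup>*"
  using assms(1,2)
proof (induction rule: rtrancl_induct)
  case base
  then show ?case by simp
next
  case (step y z)
  show ?case
  proof (cases "y = a")
    case True
    then show ?thesis using step assms(3) by auto
  next
    case False
    then obtain w where w: "(a, w) \<in> E" "w \<in> V - {a}" "(w, y) \<in> (E \<inter> (V - {a}) \<times> (V - {a}))\<^sup>*"
      using step by blast
    have "(y, z) \<in> E \<inter> (V - {a}) \<times> (V - {a})" using step(2,4) False assms(3) by auto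
    then show ?thesis using w by (meson rtrancl_into_rtrancl)
  qed
qed

lemma restrict_rtrancl:
  assumes "(x, y) \<in> E\<^sup>*" "x \<in> S" "\<forall>u w. u \<in> S \<longrightarrow> (u, w) \<in> E \<longrightarrow> w \<in> S"
  shows "(x, y) \<in> (E \<inter> S \<times> S)\<^sup>* \<and> y \<in> S"
  using assms(1)
proof (induction rule: rtrancl_induct)
  case base
  then show ?case using assms(2) by simp
next
  case (step y z)
  then have "z \<in> S" using assms(3) by blast
  then show ?case using step by (meson IntI SigmaI rtrancl_into_rtrancl)
qed

lemma dfs_exists:
  assumes "finite V" "E \<subseteq> V \<times> V" "sym E" "A \<subseteq> V" "\<forall>x\<in>V. \<exists>b\<in>A. (b, x) \<in> E\<^sup>*"
  shows "\<exists>par. dfs_forest V E par \<and> (\<forall>x\<in>V. par x = None \<longrightarrow> x \<in> A)"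
  using assms
proof (induction "card V" arbitrary: V E A rule: less_induct)
  case less
  show ?case
  proof (cases "V = {}")
    case True
    then have "E = {}" using less.prems(2) by blast
    then show ?thesis using True
      by (intro exI[of _ "\<lambda>_. None"]) (auto simp: dfs_forest_def rooted_forest_def parent_rel_def acyclic_def)
  next
    case False
    then obtain a where aA: "a \<in> A" using less.prems(5) by blast
    have aV: "a \<in> V" using aA less.prems(4) by blast
    define C where "C = {x \<in> V. (a, x) \<in> E\<^sup>*}"
    show ?thesis
    proof (cases "C = V")
      case True
      define V' where "V' = V - {a}"
      define E' where "E' = E \<inter> V' \<times> V'"
      define A' where "A' = {u \<in> V'. (a, u) \<in> E}"
      have cV': "card V' < card V" unfolding V'_def by (rule card_Diff1_less[OF less.prems(1) aV])
      have f': "finite V'" unfolding V'_def using less.prems(1) by simp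
      have E'V: "E' \<subseteq> V' \<times> V'" unfolding E'_def by blast
      have sE': "sym E'" using less.prems(3) unfolding E'_def sym_def by blast
      have A'V: "A' \<subseteq> V'" unfolding A'_def by blast
      have reach': "\<forall>x\<in>V'. \<exists>b\<in>A'. (b, x) \<in> E'\<^sup>*"
      proof
        fix x assume x: "x \<in> V'"
        then have "(a, x) \<in> E\<^sup>*" "x \<noteq> a" using True unfolding C_def V'_def by auto
        from reach_avoid[OF this less.prems(2)] show "\<exists>b\<in>A'. (b, x) \<in> E'\<^sup>*"
          unfolding A'_def E'_def V'_def by blast
      qed
      from less.hyps[OF cV' f' E'V sE' A'V reach']
      obtain p' where p': "dfs_forest V' E' p'" "\<forall>x\<in>V'. p' x = None \<longrightarrow> x \<in> A'" by blast
      have aV': "a \<notin> V'" unfolding V'_def by simp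
      have roots: "\<forall>x\<in>V'. p' x = None \<longrightarrow> (a, x) \<in> E" using p'(2) unfolding A'_def by blast
      have EE: "E' \<subseteq> E" unfolding E'_def by blast
      have Ecases: "\<forall>(u, w)\<in>E. (u, w) \<in> E' \<or> u = a \<or> w = a"
        using less.prems(2) unfolding E'_def V'_def by blast
      have ins: "insert a V' = V" unfolding V'_def using aV by blast
      have EV: "E \<subseteq> insert a V' \<times> insert a V'" unfolding ins by (rule less.prems(2))
      from add_root[OF p'(1) aV' f' roots EE Ecases EV] ins
      have "dfs_forest V E (\<lambda>x. if x = a then None else if x \<in> V' \<and> p' x = None then Some a else p' x)"
        by simp
      moreover have "\<forall>x\<in>V. (if x = a then None else if x \<in> V' \<and> p' x = None then Some a else p' x) = None
          \<longrightarrow> x \<in> A" using aA unfolding V'_def by auto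
      ultimately show ?thesis by blast
    next
      case False
      define D where "D = V - C"
      define EC where "EC = E \<inter> C \<times> C"
      define ED where "ED = E \<inter> D \<times> D"
      have closC: "\<forall>u w. u \<in> C \<longrightarrow> (u, w) \<in> E \<longrightarrow> w \<in> C"
        using less.prems(2) unfolding C_def by (auto intro: rtrancl_into_rtrancl)
      have closD: "\<forall>u w. u \<in> D \<longrightarrow> (u, w) \<in> E \<longrightarrow> w \<in> D"
      proof (intro allI impI)
        fix u w assume u: "u \<in> D" and uw: "(u, w) \<in> E"
        have "(w, u) \<in> E" using uw less.prems(3) by (auto dest: symD)
        then show "w \<in> D" using u closC less.prems(2) uw unfolding D_def by blast
      qed
      have aC: "a \<in> C" unfolding C_def using aV by simp
      have CV: "C \<subseteq> V" unfolding C_def by blast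
      have cC: "card C < card V" using CV False less.prems(1) by (simp add: psubset_card_mono psubsetI)
      have cD: "card D < card V" unfolding D_def using aC aV less.prems(1)
        by (metis Diff_iff Diff_subset psubsetI psubset_card_mono)
      have fC: "finite C" "finite D" using CV less.prems(1) unfolding D_def by (auto intro: finite_subset)
      have symC: "sym EC" "sym ED" using less.prems(3) unfolding EC_def ED_def sym_def by blast+
      have reachC: "\<forall>x\<in>C. \<exists>b\<in>A \<inter> C. (b, x) \<in> EC\<^sup>*"
      proof
        fix x assume "x \<in> C"
        then have "(a, x) \<in> E\<^sup>*" unfolding C_def by blast
        then have "(a, x) \<in> EC\<^sup>*" using restrict_rtrancl[OF _ aC closC] unfolding EC_def by blast
        then show "\<exists>b\<in>A \<inter> C. (b, x) \<in> EC\<^sup>*" using aA aC by blast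
      qed
      have reachD: "\<forall>x\<in>D. \<exists>b\<in>A \<inter> D. (b, x) \<in> ED\<^sup>*"
      proof
        fix x assume x: "x \<in> D"
        then obtain b where b: "b \<in> A" "(b, x) \<in> E\<^sup>*" using less.prems(5) unfolding D_def by blast
        have "b \<notin> C"
        proof
          assume "b \<in> C"
          then have "x \<in> C" using restrict_rtrancl[OF b(2) _ closC] by blast
          then show False using x unfolding D_def by blast
        qed
        then have bD: "b \<in> D" using b(1) less.prems(4) unfolding D_def by blast
        then have "(b, x) \<in> ED\<^sup>*" using restrict_rtrancl[OF b(2) bD closD] unfolding ED_def by blast
        then show "\<exists>b\<in>A \<inter> D. (b, x) \<in> ED\<^sup>*" using b(1) bD by blast
      qed
      from less.hyps[OF cC fC(1) _ symC(1) _ reachC]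
      obtain pc where pc: "dfs_forest C EC pc" "\<forall>x\<in>C. pc x = None \<longrightarrow> x \<in> A \<inter> C"
        unfolding EC_def by blast
      from less.hyps[OF cD fC(2) _ symC(2) _ reachD]
      obtain pd where pd: "dfs_forest D ED pd" "\<forall>x\<in>D. pd x = None \<longrightarrow> x \<in> A \<inter> D"
        unfolding ED_def by blast
      have cd: "C \<inter> D = {}" unfolding D_def by blast
      have EE: "E = EC \<union> ED"
      proof
        show "E \<subseteq> EC \<union> ED"
        proof
          fix e assume e: "e \<in> E"
          obtain u w where "e = (u, w)" by (cases e)
          then show "e \<in> EC \<union> ED" using e closC closD less.prems(2) unfolding EC_def ED_def D_def by blast
        qed
      qed (auto simp: EC_def ED_def)
      have CD: "C \<union> D = V" unfolding D_def using CV by blast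
      from combine[OF pc(1) pd(1) cd EE fC] CD
      have "dfs_forest V E (\<lambda>x. if x \<in> C then pc x else pd x)" by simp
      moreover have "\<forall>x\<in>V. (if x \<in> C then pc x else pd x) = None \<longrightarrow> x \<in> A"
        using pc(2) pd(2) CD by auto
      ultimately show ?thesis by blast
    qed
  qed
qed



theorem theorem11:
  fixes r :: nat
  assumes "r \<ge> 1"
  shows "\<exists>c::nat. \<forall>(V :: 'a set) E.
           simple_graph V E \<and> graph_connected V E \<and> \<not> subcubic V E
           \<and> \<not> has_subgraph (spider_V 1 1 1 r) (spider_E 1 1 1 r) V E
           \<longrightarrow> treedepth V E \<le> c"
proof -
  define K where "K = r * (r + 2) + 1"
  show ?thesis
  proof (intro exI[of _ "2 * K"] allI impI)
    fix V :: "'a set" and E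
    assume H: "simple_graph V E \<and> graph_connected V E \<and> \<not> subcubic V E
           \<and> \<not> has_subgraph (spider_V 1 1 1 r) (spider_E 1 1 1 r) V E"
    have fin: "finite V" and EV: "E \<subseteq> V \<times> V" and symE: "sym E" and irr: "irrefl E"
      using H unfolding simple_graph_def by auto
    have conn: "\<forall>u\<in>V. \<forall>w\<in>V. (u, w) \<in> E\<^sup>*" using H unfolding graph_connected_def by blast
    obtain v where vV: "v \<in> V" and dv: "card {u. (v, u) \<in> E} \<ge> 4"
      using H unfolding subcubic_def by force
    have nosp: "\<not> has_subgraph (spider_V 1 1 1 r) (spider_E 1 1 1 r) V E" using H by blast
    have nolong: "length P < 2 * K" if P: "distinct P" "walk E P" "set P \<subseteq> V" for P
    proof (rule ccontr)
      assume "\<not> length P < 2 * K"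
      then have "length P \<ge> 2 * K" by simp
      from long_from_v[OF EV symE conn vV P this] obtain ps where
        ps: "distinct ps" "walk E ps" "ps \<noteq> []" "hd ps = v" "set ps \<subseteq> V" "length ps \<ge> K" by blast
      have "has_subgraph (spider_V 1 1 1 r) (spider_E 1 1 1 r) V E"
        using centre[OF symE irr EV assms dv ps(1-5)] ps(6) unfolding K_def by blast
      then show False using nosp by blast
    qed
    have "\<forall>x\<in>V. \<exists>b\<in>V. (b, x) \<in> E\<^sup>*" by blast
    from dfs_exists[OF fin EV symE subset_refl this]
    obtain par where par: "dfs_forest V E par" by blast
    have dep: "forest_depth par x < 2 * K" if x: "x \<in> V" for x
    proof -
      from chain[OF par fin x] obtain xs where xs: "walk E xs" "distinct xs"
        "set xs = {u. (u, x) \<in> (parent_rel par)\<^sup>*}" "set xs \<subseteq> V" by blast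
      have "forest_depth par x = length xs"
        unfolding forest_depth_def xs(3)[symmetric] using distinct_card[OF xs(2)] by simp
      then show ?thesis using nolong[OF xs(2,1,4)] by simp
    qed
    have fh: "forest_height V par \<le> 2 * K"
    proof (cases "V = {}")
      case True
      then show ?thesis unfolding forest_height_def by simp
    next
      case False
      then show ?thesis unfolding forest_height_def using dep fin by (simp add: less_imp_le)
    qed
    have "treedepth V E \<le> forest_height V par"
      unfolding treedepth_def
    proof (rule Least_le)
      show "\<exists>par'. rooted_forest V par' \<and> forest_height V par' = forest_height V par \<and>
          (\<forall>(u, v)\<in>E. (u, v) \<in> (parent_rel par')\<^sup>* \<or> (v, u) \<in> (parent_rel par')\<^sup>*)"
        using par unfolding dfs_forest_def by blast
    qed
    then show "treedepth V E \<le> 2 * K" using fh by linarith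
  qed
qed


end
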